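(* Let $\mathcal{P}$ be a probability distribution on $\mathbb{R}$ and let $X$ be a random variable with distribution $\mathcal{P}$. Define $g(p) := \inf\{r \in \mathbb{R} : \mathbb{P}(X \geq r) \leq p\}$ for $0<p<1$. Assume that $\mathbb{E}|X| < \infty$, that $g(p) \to \infty$ as $p \to 0^+$, and that $g$ is slowly varying at zero, i.e. $g(\lambda p)/g(p) \to 1$ as $p \to 0^+$ for every fixed $\lambda > 0$. For $n\in\mathbb{N}$ let $M_n = \max_{1\le i\le n} X_i$, where $X_1,\dots,X_n$ are i.i.d. with distribution $\mathcal{P}$. Then $$\mathbb{E} M_n \leq g(1/n)(1+o(1)) \quad \text{as } n\to\infty.$$ *)

theory Defs
  imports "HOL-Probability.Probability"
begin

definition upper_quantile :: "real measure \<Rightarrow> real \<Rightarrow> real" where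
  "upper_quantile P p = Inf {r. measure P {r..} \<le> p}"

end

theory Submission
  imports Defs
begin


lemma uq_set:
  assumes "real_distribution P" "0 < q" "q < 1"
  shows "{r. measure P {r..} \<le> q} \<noteq> {}" "bdd_below {r. measure P {r..} \<le> q}"
proof -
  interpret real_distribution P by fact
  have compl: "measure P {r..} = 1 - measure P {..<r}" for r
  proof -
    have "UNIV - {..<r} = {r..}" by auto
    then show ?thesis using prob_compl[of "{..<r}"] by simp
  qed
  have "eventually (\<lambda>r. cdf P r > 1 - q) at_top"
    using cdf_lim_at_top_prob assms by (intro order_tendstoD) auto
  then obtain r0 where r0: "\<And>r. r \<ge> r0 \<Longrightarrow> cdf P r > 1 - q"
    by (auto simp: eventually_at_top_linorder)
  have "cdf P r0 \<le> measure P {..<r0+1}"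
    unfolding cdf_def by (intro finite_measure_mono) auto
  then have "measure P {r0+1..} \<le> q" using r0[of r0] compl[of "r0+1"] by simp
  then show "{r. measure P {r..} \<le> q} \<noteq> {}" by blast
  have "eventually (\<lambda>r. cdf P r < 1 - q) at_bot"
    using cdf_lim_at_bot assms by (intro order_tendstoD) auto
  then obtain b where b: "\<And>r. r \<le> b \<Longrightarrow> cdf P r < 1 - q"
    by (auto simp: eventually_at_bot_linorder)
  show "bdd_below {r. measure P {r..} \<le> q}"
  proof (rule bdd_belowI)
    fix r assume r: "r \<in> {r. measure P {r..} \<le> q}"
    show "b \<le> r"
    proof (rule ccontr)
      assume "\<not> b \<le> r"
      then have "cdf P r < 1 - q" using b by simp
      moreover have "measure P {..<r} \<le> cdf P r"
        unfolding cdf_def by (intro finite_measure_mono) auto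
      ultimately show False using r compl[of r] by simp
    qed
  qed
qed

lemma uq_tail:
  assumes "real_distribution P" "0 < q" "q < 1" "upper_quantile P q < r"
  shows "measure P {r..} \<le> q"
proof -
  interpret real_distribution P by fact
  obtain a where a: "a \<in> {r. measure P {r..} \<le> q}" "a < r"
    using cInf_lessD[OF uq_set(1)[OF assms(1-3)]] assms(4) unfolding upper_quantile_def by blast
  have "measure P {r..} \<le> measure P {a..}"
    by (intro finite_measure_mono) (use a in auto)
  then show ?thesis using a by simp
qed

lemma uq_mono:
  assumes "real_distribution P" "0 < q" "q \<le> q'" "q' < 1"
  shows "upper_quantile P q' \<le> upper_quantile P q"
  unfolding upper_quantile_def
  by (rule cInf_superset_mono[OF uq_set(1)[OF assms(1,2)] uq_set(2)[OF assms(1)]])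
     (use assms in auto)



lemma tail_bound:
  fixes h w :: "nat \<Rightarrow> real"
  assumes "real_distribution P" "incseq h" "filterlim h at_top sequentially"
    and meas: "\<And>k. measure P {h k..} \<le> w k"
    and summ: "summable (\<lambda>k. (h (Suc k) - h k) * w k)"
  shows "integral\<^sup>L P (\<lambda>x. max 0 (x - h 0)) \<le> (\<Sum>k. (h (Suc k) - h k) * w k)"
proof -
  interpret real_distribution P by fact
  have c_nn: "0 \<le> h (Suc k) - h k" for k using assms(2) by (simp add: incseq_Suc_iff)
  have w_nn: "0 \<le> w k" for k using meas[of k] measure_nonneg[of P "{h k..}"] by linarith
  have pw: "ennreal (max 0 (x - h 0)) \<le> (\<Sum>k. ennreal (h (Suc k) - h k) * indicator {h k..} x)" for x
  proof (cases "x < h 0")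
    case True then show ?thesis by simp
  next
    case False
    have "eventually (\<lambda>N. h N > x) sequentially"
      using assms(3) by (simp add: filterlim_at_top_dense)
    then obtain N0 where "h N0 > x" by (auto simp: eventually_sequentially)
    define N where "N = (LEAST N. x < h N)"
    have N: "x < h N" unfolding N_def by (rule LeastI) fact
    have "N \<noteq> 0" using N False by (metis)
    then obtain K where K: "N = Suc K" by (cases N) auto
    have hK: "h K \<le> x" using not_less_Least[of K "\<lambda>N. x < h N"] K N_def by force
    have "max 0 (x - h 0) \<le> h (Suc K) - h 0" using N K False by simp
    also have "\<dots> = (\<Sum>k<Suc K. h (Suc k) - h k)" by (simp add: sum_lessThan_telescope)
    finally have "ennreal (max 0 (x - h 0)) \<le> ennreal (\<Sum>k<Suc K. h (Suc k) - h k)"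
      by (rule ennreal_leI)
    also have "\<dots> = (\<Sum>k<Suc K. ennreal (h (Suc k) - h k) * indicator {h k..} x)"
    proof -
      have "h k \<le> x" if "k < Suc K" for k
        using hK assms(2) that by (meson incseq_def less_Suc_eq_le order_trans)
      then have "(\<Sum>k<Suc K. ennreal (h (Suc k) - h k) * indicator {h k..} x) = (\<Sum>k<Suc K. ennreal (h (Suc k) - h k))"
        by (intro sum.cong) (auto simp: indicator_def)
      then show ?thesis by (simp only: sum_ennreal[OF c_nn])
    qed
    also have "\<dots> \<le> (\<Sum>k. ennreal (h (Suc k) - h k) * indicator {h k..} x)"
      by (rule sum_le_suminf) (auto intro: summableI)
    finally show ?thesis .
  qed
  have "(\<integral>\<^sup>+x. ennreal (max 0 (x - h 0)) \<partial>P) \<le> (\<integral>\<^sup>+x. (\<Sum>k. ennreal (h (Suc k) - h k) * indicator {h k..} x) \<partial>P)"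
    by (intro nn_integral_mono pw)
  also have "\<dots> = (\<Sum>k. \<integral>\<^sup>+x. ennreal (h (Suc k) - h k) * indicator {h k..} x \<partial>P)"
    by (rule nn_integral_suminf) auto
  also have "\<dots> = (\<Sum>k. ennreal (h (Suc k) - h k) * emeasure P {h k..})"
    by (subst nn_integral_cmult_indicator) auto
  also have "\<dots> \<le> (\<Sum>k. ennreal ((h (Suc k) - h k) * w k))"
  proof (intro suminf_le summableI)
    fix k
    have "emeasure P {h k..} \<le> ennreal (w k)"
      using meas[of k] by (simp add: emeasure_eq_measure ennreal_leI)
    then show "ennreal (h (Suc k) - h k) * emeasure P {h k..} \<le> ennreal ((h (Suc k) - h k) * w k)"
      using c_nn w_nn by (simp add: ennreal_mult' mult_left_mono)
  qed
  also have "\<dots> = ennreal (\<Sum>k. (h (Suc k) - h k) * w k)"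
    using c_nn w_nn summ by (intro suminf_ennreal2) auto
  finally have le: "(\<integral>\<^sup>+x. ennreal (max 0 (x - h 0)) \<partial>P) \<le> ennreal (\<Sum>k. (h (Suc k) - h k) * w k)" .
  have "integral\<^sup>L P (\<lambda>x. max 0 (x - h 0)) = enn2real (\<integral>\<^sup>+x. ennreal (max 0 (x - h 0)) \<partial>P)"
    by (rule integral_eq_nn_integral) auto
  also have "\<dots> \<le> enn2real (ennreal (\<Sum>k. (h (Suc k) - h k) * w k))"
    by (rule enn2real_mono[OF le]) simp
  also have "\<dots> = (\<Sum>k. (h (Suc k) - h k) * w k)"
    using c_nn w_nn by (simp add: suminf_nonneg[OF summ])
  finally show ?thesis .
qed



lemma max_bound:
  fixes X :: "nat \<Rightarrow> 'a \<Rightarrow> real"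
  assumes M_prob: "prob_space M" and Xm: "\<And>i. X i \<in> borel_measurable M"
    and distr: "\<And>i. distr M borel (X i) = P" and PI: "integrable P (\<lambda>x. x)"
    and Pp: "prob_space P" and c: "0 \<le> c" and n: "1 \<le> n"
  shows "integral\<^sup>L M (\<lambda>\<omega>. Max ((\<lambda>i. X i \<omega>) ` {1..n})) \<le> c + real n * integral\<^sup>L P (\<lambda>x. max 0 (x - c))"
proof -
  interpret prob_space M by fact
  have PI2: "integrable P (\<lambda>x. max 0 (x - c))"
  proof -
    interpret P: prob_space P by fact
    show ?thesis using PI by (intro integrable_max integrable_diff) auto
  qed
  have int_i: "integrable M (\<lambda>\<omega>. max 0 (X i \<omega> - c))" for i
  proof -
    have "integrable (distr M borel (X i)) (\<lambda>x. max 0 (x - c))" using PI2 distr by simp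
    then show ?thesis by (subst (asm) integrable_distr_eq) (auto simp: Xm)
  qed
  have eq_i: "integral\<^sup>L M (\<lambda>\<omega>. max 0 (X i \<omega> - c)) = integral\<^sup>L P (\<lambda>x. max 0 (x - c))" for i
  proof -
    have "integral\<^sup>L P (\<lambda>x. max 0 (x - c)) = integral\<^sup>L (distr M borel (X i)) (\<lambda>x. max 0 (x - c))"
      using distr by simp
    also have "\<dots> = integral\<^sup>L M (\<lambda>\<omega>. max 0 (X i \<omega> - c))"
      by (rule integral_distr) (auto simp: Xm)
    finally show ?thesis by simp
  qed
  have "integral\<^sup>L M (\<lambda>\<omega>. Max ((\<lambda>i. X i \<omega>) ` {1..n})) \<le>
        integral\<^sup>L M (\<lambda>\<omega>. c + (\<Sum>i\<in>{1..n}. max 0 (X i \<omega> - c)))"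
  proof (rule integral_mono')
    show "integrable M (\<lambda>\<omega>. c + (\<Sum>i\<in>{1..n}. max 0 (X i \<omega> - c)))"
      using int_i by auto
    fix \<omega>
    show "0 \<le> c + (\<Sum>i\<in>{1..n}. max 0 (X i \<omega> - c))"
      using c sum_nonneg[of "{1..n}" "\<lambda>i. max 0 (X i \<omega> - c)"] by simp
    have "Max ((\<lambda>i. X i \<omega>) ` {1..n}) \<in> (\<lambda>i. X i \<omega>) ` {1..n}"
      using n by (intro Max_in) auto
    then obtain j where j: "j \<in> {1..n}" "Max ((\<lambda>i. X i \<omega>) ` {1..n}) = X j \<omega>" by auto
    have "X j \<omega> \<le> c + max 0 (X j \<omega> - c)" by simp
    also have "max 0 (X j \<omega> - c) \<le> (\<Sum>i\<in>{1..n}. max 0 (X i \<omega> - c))"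
      by (rule member_le_sum) (use j in auto)
    finally show "Max ((\<lambda>i. X i \<omega>) ` {1..n}) \<le> c + (\<Sum>i\<in>{1..n}. max 0 (X i \<omega> - c))"
      using j by simp
  qed
  also have "\<dots> = c + (\<Sum>i\<in>{1..n}. integral\<^sup>L M (\<lambda>\<omega>. max 0 (X i \<omega> - c)))"
    using int_i by (simp add: integral_sum prob_space)
  also have "\<dots> = c + real n * integral\<^sup>L P (\<lambda>x. max 0 (x - c))"
    by (simp add: eq_i)
  finally show ?thesis .
qed



lemma potter_lemma:
  fixes g :: "real \<Rightarrow> real"
  assumes g_infty: "filterlim g at_top (at_right 0)"
    and sv: "((\<lambda>p. g ((1/2) * p) / g p) \<longlongrightarrow> 1) (at_right 0)"
  shows "\<exists>p0>0. \<forall>p. 0 < p \<and> p < p0 \<longrightarrow> p < 1/2 \<and>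
           (\<forall>k. g ((1/2)^k * p) \<le> sqrt 2 ^ k * g p \<and> g ((1/2)^k * p) > 0)"
proof -
  have ev1: "eventually (\<lambda>p. g p > 0) (at_right (0::real))"
    using g_infty unfolding filterlim_at_top_dense by blast
  have ev2: "eventually (\<lambda>p. g ((1/2) * p) / g p < sqrt 2) (at_right (0::real))"
    using sv by (rule order_tendstoD) simp
  have ev3: "eventually (\<lambda>p. p < (1/2::real)) (at_right 0)"
    unfolding eventually_at_right_field by (intro exI[of _ "1/2"]) auto
  obtain p0 :: real where p0: "p0 > 0"
    and p0P: "\<And>p. 0 < p \<Longrightarrow> p < p0 \<Longrightarrow> g p > 0 \<and> g ((1/2) * p) / g p < sqrt 2 \<and> p < 1/2"
    using eventually_conj[OF ev1 eventually_conj[OF ev2 ev3]] unfolding eventually_at_right_field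
    by blast
  have potter: "g ((1/2)^k * p) \<le> sqrt 2 ^ k * g p \<and> g ((1/2)^k * p) > 0"
    if p: "0 < p" "p < p0" for p k
  proof (induction k)
    case 0 then show ?case using p0P[OF p] by simp
  next
    case (Suc k)
    have le: "(1/2::real)^k * p \<le> p"
      using p by (simp add: mult_le_cancel_right1 power_le_one)
    have q: "0 < (1/2::real)^k * p" "(1/2)^k * p < p0"
      using p le by (simp, linarith)
    have "g ((1/2) * ((1/2)^k * p)) < sqrt 2 * g ((1/2)^k * p)"
      using p0P[OF q] by (simp add: divide_less_eq)
    moreover have "g ((1/2) * ((1/2)^k * p)) > 0"
      using p0P[of "(1/2) * ((1/2)^k * p)"] q by auto
    moreover have "sqrt 2 * g ((1/2)^k * p) \<le> sqrt 2 * (sqrt 2 ^ k * g p)"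
      using Suc.IH by (intro mult_left_mono) auto
    ultimately have "g ((1/2) * ((1/2)^k * p)) \<le> sqrt 2 * (sqrt 2 ^ k * g p) \<and> g ((1/2) * ((1/2)^k * p)) > 0"
      by linarith
    then show ?case by (simp only: power_Suc mult.assoc)
  qed
  show ?thesis using p0 p0P potter by blast
qed



lemma tannery_part:
  fixes g :: "real \<Rightarrow> real"
  assumes sv: "\<And>l. l > 0 \<Longrightarrow> ((\<lambda>p. g (l * p) / g p) \<longlongrightarrow> 1) (at_right 0)"
    and p0: "p0 > 0"
    and pot: "\<forall>p. 0 < p \<and> p < p0 \<longrightarrow> p < 1/2 \<and>
           (\<forall>k. g ((1/2)^k * p) \<le> sqrt 2 ^ k * g p \<and> g ((1/2)^k * p) > 0)"
  defines "a \<equiv> \<lambda>k n. (1/2::real)^Suc k * (g ((1/2)^Suc k * (1 / real n)) / g (1 / real n))"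
  shows "((\<lambda>n. \<Sum>k. a k n) \<longlongrightarrow> 1) sequentially \<and> eventually (\<lambda>n. summable (\<lambda>k. a k n)) sequentially"
proof -
  have inv_lim: "filterlim (\<lambda>n. 1 / real n) (at_right 0) sequentially"
    using filterlim_compose[OF filterlim_inverse_at_right_top filterlim_real_sequentially]
    by (simp add: inverse_eq_divide)
  have lim_a: "(\<lambda>n. a k n) \<longlonglongrightarrow> (1/2)^Suc k" for k
  proof -
    have "((\<lambda>n. g ((1/2)^Suc k * (1/real n)) / g (1/real n)) \<longlongrightarrow> 1) sequentially"
      using filterlim_compose[OF sv[of "(1/2)^Suc k"] inv_lim] by simp
    then have "((\<lambda>n. (1/2::real)^Suc k * (g ((1/2)^Suc k * (1/real n)) / g (1/real n))) \<longlongrightarrow> (1/2)^Suc k * 1) sequentially"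
      by (rule tendsto_mult_left)
    then show ?thesis unfolding a_def by simp
  qed
  obtain m :: nat where m: "inverse (real (Suc m)) < p0"
    using reals_Archimedean[OF p0] by blast
  define N0 where "N0 = Suc m"
  have nbig: "0 < 1 / real n \<and> 1 / real n < p0" if "n \<ge> N0" for n
  proof -
    have "1 / real n \<le> 1 / real N0" using that by (simp add: N0_def frac_le)
    then show ?thesis using m that by (auto simp: N0_def inverse_eq_divide)
  qed
  have s2: "sqrt 2 < (2::real)"
    using real_sqrt_less_iff[of 2 4] by simp
  have bnd: "norm (a k n) \<le> (sqrt 2 / 2)^Suc k" if "n \<ge> N0" for k n
  proof -
    define p where "p = 1 / real n"
    have p: "0 < p" "p < p0" using nbig[OF that] by (auto simp: p_def)
    note PP = conjunct2[OF pot[rule_format, OF conjI[OF p]]]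
    have A: "g ((1/2)^Suc k * p) \<le> sqrt 2 ^ Suc k * g p" "g ((1/2)^Suc k * p) > 0"
      using PP[rule_format, of "Suc k"] by auto
    have gp: "g p > 0" using PP[rule_format, of 0] by simp
    have an: "a k n = (1/2)^Suc k * (g ((1/2)^Suc k * p) / g p)" by (simp add: a_def p_def)
    have r: "g ((1/2)^Suc k * p) / g p \<le> sqrt 2 ^ Suc k"
      using A gp by (simp add: divide_le_eq)
    have "a k n \<le> (1/2)^Suc k * sqrt 2 ^ Suc k"
      unfolding an by (rule mult_left_mono[OF r]) simp
    moreover have "a k n \<ge> 0" unfolding an using A gp by simp
    moreover have "(sqrt 2 / 2 :: real)^Suc k = (1/2)^Suc k * sqrt 2^Suc k"
      by (subst power_mult_distrib[symmetric]) simp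
    ultimately show ?thesis by (metis real_norm_def abs_of_nonneg)
  qed
  have bound: "eventually (\<lambda>(k,n). norm (a k n) \<le> (sqrt 2 / 2)^Suc k) (at_top \<times>\<^sub>F sequentially)"
    unfolding eventually_prod_filter
    apply (rule exI[of _ "\<lambda>_. True"], rule exI[of _ "\<lambda>n. n \<ge> N0"])
    using bnd by (auto simp: eventually_sequentially simp del: power_Suc)
  have summM: "summable (\<lambda>k. (sqrt 2 / 2 :: real)^Suc k)"
    unfolding summable_Suc_iff using s2 by (intro summable_geometric) simp
  note tan = tannerys_theorem[OF lim_a bound summM trivial_limit_sequentially]
  have half: "(\<Sum>k. (1/2::real)^Suc k) = 1" using power_half_series sums_unique by metis
  have "((\<lambda>n. \<Sum>k. a k n) \<longlongrightarrow> 1) sequentially"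
    using conjunct2[OF conjunct2[OF tan]] half by simp
  moreover have "eventually (\<lambda>n. summable (\<lambda>k. a k n)) sequentially"
    using conjunct1[OF tan] by eventually_elim (rule summable_norm_cancel)
  ultimately show ?thesis by blast
qed



lemma per_n:
  fixes P :: "real measure" and M :: "'a measure" and X :: "nat \<Rightarrow> 'a \<Rightarrow> real" and g :: "real \<Rightarrow> real"
  assumes RD: "real_distribution P" and P_prob: "prob_space P" and M_prob: "prob_space M"
    and Xm: "\<And>i. X i \<in> borel_measurable M"
    and distr: "\<And>i. distr M borel (X i) = P"
    and integrable: "integrable P (\<lambda>x. x)"
    and g_def: "g = upper_quantile P"
    and g_infty: "filterlim g at_top (at_right 0)"
    and n1: "1 \<le> n" and p_def: "p = 1 / real n" and p1: "p < 1"
    and Gpos: "\<And>k. g ((1/2)^k * p) > 0"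
    and sumS: "summable (\<lambda>k. (1/2::real)^Suc k * g ((1/2)^Suc k * p))"
  shows "integral\<^sup>L M (\<lambda>\<omega>. Max ((\<lambda>i. X i \<omega>) ` {1..n})) \<le> (\<Sum>k. (1/2::real)^Suc k * g ((1/2)^Suc k * p))"
proof -
  have p: "0 < p" using n1 by (simp add: p_def)
  have np: "real n * p = 1" using n1 by (simp add: p_def)
  define G where "G k = g ((1/2)^k * p)" for k
  have G0: "G 0 = g p" by (simp add: G_def)
  have qk: "0 < (1/2::real)^k * p" "(1/2::real)^k * p < 1" for k
  proof -
    show "0 < (1/2::real)^k * p" using p by simp
    have "(1/2::real)^k * p \<le> p" using p by (simp add: mult_le_cancel_right1 power_le_one)
    then show "(1/2::real)^k * p < 1" using p1 by simp
  qed
  have Gmono: "G k \<le> G (Suc k)" for k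
  proof -
    have "(1/2::real)^Suc k * p \<le> (1/2)^k * p" using p by simp
    then show ?thesis
      unfolding G_def g_def by (rule uq_mono[OF RD qk(1) _ qk(2)])
  qed
  have Ginf: "filterlim G at_top sequentially"
  proof -
    have "(\<lambda>k. (1/2::real)^k * p) \<longlonglongrightarrow> 0"
      by (intro tendsto_mult_left_zero LIMSEQ_power_zero) simp
    then have "filterlim (\<lambda>k. (1/2::real)^k * p) (at_right 0) sequentially"
      by (rule tendsto_imp_filterlim_at_right) (intro always_eventually allI qk)
    from filterlim_compose[OF g_infty this] show ?thesis unfolding G_def .
  qed
  define S where "S = (\<Sum>k. (1/2::real)^Suc k * G (Suc k))"
  have sumS': "summable (\<lambda>k. (1/2::real)^Suc k * G (Suc k))"
    using sumS by (simp add: G_def)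
  have "integral\<^sup>L M (\<lambda>\<omega>. Max ((\<lambda>i. X i \<omega>) ` {1..n})) \<le> S"
  proof (rule field_le_epsilon)
    fix \<eta> :: real assume eta: "0 < \<eta>"
    define h where "h k = G k + \<eta>" for k
    define w where "w k = (1/2::real)^k * p" for k
    have inc: "incseq h" by (rule incseq_SucI) (simp add: h_def Gmono)
    have hinf: "filterlim h at_top sequentially"
      unfolding filterlim_at_top_dense
    proof
      fix Z :: real
      have "eventually (\<lambda>k. Z < G k) sequentially"
        using Ginf unfolding filterlim_at_top_dense by blast
      then show "eventually (\<lambda>k. Z < h k) sequentially"
        by eventually_elim (use eta in \<open>simp add: h_def\<close>)
    qed
    have meas: "measure P {h k..} \<le> w k" for k
      unfolding w_def
      by (rule uq_tail[OF RD qk]) (use eta in \<open>simp add: h_def G_def g_def\<close>)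
    have f1s: "summable (\<lambda>k. G (Suc k) * (1/2)^k)"
    proof -
      have "summable (\<lambda>k. 2 * ((1/2::real)^Suc k * G (Suc k)))"
        by (rule summable_mult[OF sumS'])
      then show ?thesis by (simp add: mult_ac)
    qed
    have f2s: "summable (\<lambda>k. G k * (1/2)^k)"
    proof -
      have "summable (\<lambda>k. G (Suc k) * (1/2)^Suc k)"
        using sumS' by (simp add: mult_ac)
      then show ?thesis by (subst (asm) summable_Suc_iff)
    qed
    have Us: "summable (\<lambda>k. (G (Suc k) - G k) * (1/2)^k)"
      using summable_diff[OF f1s f2s] by (simp add: left_diff_distrib)
    have summ: "summable (\<lambda>k. (h (Suc k) - h k) * w k)"
      using summable_mult2[OF Us, of p] by (simp add: h_def w_def mult_ac)
    have TB: "integral\<^sup>L P (\<lambda>x. max 0 (x - h 0)) \<le> (\<Sum>k. (h (Suc k) - h k) * w k)"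
      by (rule tail_bound[OF RD inc hinf meas summ])
    have h0: "0 \<le> h 0" using Gpos[of 0] eta by (simp add: h_def G_def)
    have MB: "integral\<^sup>L M (\<lambda>\<omega>. Max ((\<lambda>i. X i \<omega>) ` {1..n})) \<le> h 0 + real n * integral\<^sup>L P (\<lambda>x. max 0 (x - h 0))"
      by (rule max_bound[OF M_prob Xm distr integrable P_prob h0 n1])
    have "real n * (\<Sum>k. (h (Suc k) - h k) * w k) = (\<Sum>k. (G (Suc k) - G k) * (1/2)^k) * (real n * p)"
      using suminf_mult2[OF Us, of p] by (simp add: h_def w_def mult_ac)
    also have "\<dots> = (\<Sum>k. (G (Suc k) - G k) * (1/2)^k)" by (simp add: np)
    also have "\<dots> = (\<Sum>k. G (Suc k) * (1/2)^k) - (\<Sum>k. G k * (1/2)^k)"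
      using suminf_diff[OF f1s f2s] by (simp add: left_diff_distrib)
    also have "(\<Sum>k. G (Suc k) * (1/2)^k) = 2 * S"
      using suminf_mult[OF sumS', of 2] by (simp add: S_def mult_ac)
    also have "(\<Sum>k. G k * (1/2)^k) = G 0 + S"
      using suminf_split_head[OF f2s] by (simp add: S_def mult_ac)
    finally have "real n * (\<Sum>k. (h (Suc k) - h k) * w k) = S - G 0" by simp
    moreover have "real n * integral\<^sup>L P (\<lambda>x. max 0 (x - h 0)) \<le> real n * (\<Sum>k. (h (Suc k) - h k) * w k)"
      using TB by (intro mult_left_mono) auto
    ultimately show "integral\<^sup>L M (\<lambda>\<omega>. Max ((\<lambda>i. X i \<omega>) ` {1..n})) \<le> S + \<eta>"
      using MB by (simp add: h_def)
  qed
  then show ?thesis by (simp add: S_def G_def)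
qed



theorem proposition3:
  fixes P :: "real measure" and M :: "'a measure" and X :: "nat \<Rightarrow> 'a \<Rightarrow> real"
  assumes P_prob: "prob_space P"
    and P_sets: "sets P = sets borel"
    and M_prob: "prob_space M"
    and indep: "prob_space.indep_vars M (\<lambda>_. borel) X UNIV"
    and distr: "\<And>i. distr M borel (X i) = P"
    and integrable: "integrable P (\<lambda>x. x)"
    and g_infty: "filterlim (upper_quantile P) at_top (at_right 0)"
    and slowly_varying: "\<And>l. l > 0 \<Longrightarrow>
        ((\<lambda>p. upper_quantile P (l * p) / upper_quantile P p) \<longlongrightarrow> 1) (at_right 0)"
  shows "\<exists>e :: nat \<Rightarrow> real. e \<longlonglongrightarrow> 0 \<and>
    (\<forall>\<^sub>F n in sequentially.
       integral\<^sup>L M (\<lambda>\<omega>. Max ((\<lambda>i. X i \<omega>) ` {1..n}))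
         \<le> upper_quantile P (1 / real n) * (1 + e n))"
proof -
  define g where "g = upper_quantile P"
  have RD: "real_distribution P"
    using P_prob P_sets by (simp add: real_distribution_def real_distribution_axioms_def)
  have Xm: "X i \<in> borel_measurable M" for i
    using conjunct1[OF indep[unfolded prob_space.indep_vars_def[OF M_prob]]] by simp
  have gi: "filterlim g at_top (at_right 0)" using g_infty by (simp add: g_def)
  have sv: "((\<lambda>p. g (l * p) / g p) \<longlongrightarrow> 1) (at_right 0)" if "l > 0" for l
    using slowly_varying[OF that] by (simp add: g_def)
  have half: "(1/2::real) > 0" by simp
  obtain p0 :: real where p0pot: "p0 > 0 \<and> (\<forall>p. 0 < p \<and> p < p0 \<longrightarrow> p < 1/2 \<and>
           (\<forall>k. g ((1/2)^k * p) \<le> sqrt 2 ^ k * g p \<and> g ((1/2)^k * p) > 0))"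
    using potter_lemma[OF gi sv[OF half]] by (rule exE)
  note p0 = conjunct1[OF p0pot] and pot = conjunct2[OF p0pot]
  define a where "a = (\<lambda>k n. (1/2::real)^Suc k * (g ((1/2)^Suc k * (1 / real n)) / g (1 / real n)))"
  have tanc: "((\<lambda>n. \<Sum>k. a k n) \<longlongrightarrow> 1) sequentially \<and> eventually (\<lambda>n. summable (\<lambda>k. a k n)) sequentially"
    unfolding a_def by (rule tannery_part[OF sv p0 pot])
  note tan = conjunct1[OF tanc] conjunct2[OF tanc]
  define e where "e n = (\<Sum>k. a k n) - 1" for n
  have "e \<longlonglongrightarrow> 0"
    using tendsto_diff[OF tan(1) tendsto_const[of 1]] unfolding e_def by simp
  moreover have "eventually (\<lambda>n. 1 / real n < p0) sequentially"
  proof -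
    have "((\<lambda>n. 1 / real n) \<longlongrightarrow> 0) sequentially" by (rule lim_const_over_n)
    then show ?thesis using p0 by (rule order_tendstoD)
  qed
  moreover have "\<forall>\<^sub>F n in sequentially.
       integral\<^sup>L M (\<lambda>\<omega>. Max ((\<lambda>i. X i \<omega>) ` {1..n})) \<le> upper_quantile P (1 / real n) * (1 + e n)"
    using eventually_conj[OF tan(2) eventually_conj[OF calculation(2) eventually_ge_at_top[of 1]]]
  proof eventually_elim
    case (elim n)
    define p where "p = 1 / real n"
    have n1: "1 \<le> n" using elim by simp
    have p: "0 < p" "p < p0" using elim n1 by (auto simp: p_def)
    note PP = pot[rule_format, OF conjI[OF p]]
    have p1: "p < 1" using PP by simp
    have Gpos: "g ((1/2)^k * p) > 0" for k using conjunct2[OF PP] by simp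
    have suma: "summable (\<lambda>k. a k n)" using elim by simp
    have Ga: "a k n * g p = (1/2)^Suc k * g ((1/2)^Suc k * p)" for k
    proof -
      have an: "a k n = (1/2)^Suc k * (g ((1/2)^Suc k * p) / g p)" by (simp add: a_def p_def)
      show ?thesis using Gpos[of 0] unfolding an by simp
    qed
    have sumS: "summable (\<lambda>k. (1/2::real)^Suc k * g ((1/2)^Suc k * p))"
      using summable_mult2[OF suma, of "g p"] by (simp only: Ga)
    have "upper_quantile P (1 / real n) * (1 + e n) = (\<Sum>k. a k n) * g p"
      by (simp add: e_def g_def p_def)
    also have "\<dots> = (\<Sum>k. a k n * g p)" by (rule suminf_mult2[OF suma])
    also have "\<dots> = (\<Sum>k. (1/2::real)^Suc k * g ((1/2)^Suc k * p))" by (simp only: Ga)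
    finally have eq: "upper_quantile P (1 / real n) * (1 + e n) = (\<Sum>k. (1/2::real)^Suc k * g ((1/2)^Suc k * p))" .
    show ?case unfolding eq
      by (rule per_n[OF RD P_prob M_prob Xm distr integrable g_def gi n1 p_def p1 Gpos sumS])
  qed
  ultimately show ?thesis by blast
qed


end
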